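(* Let $P$ be a pattern on $n$ vertices, $S$ a schedule for $P$, and $L'$ the reduced relation set (one chosen pair $(S[c_k],S[k])$ for each $k$ that has an incoming pair in $L$). Fix $0\le m\le n-1$ and let $x_0,\dots,x_m$ be independent random variables uniformly distributed on $(0,1)$. For $i\le m$ let $z_i$ be the number of indices $j\le m$ such that there is a chain $i=j_0,j_1,\dots,j_r=j$ ($r\ge 0$) with $c_{j_{t+1}}=j_t$ for all $t<r$ (so $z_i$ counts $i$ itself). Then $$\Pr\big[x_k<x_{c_k}\text{ for every }k\le m\text{ for which }c_k\text{ is defined}\big]=\prod_{i=0}^{m}\frac{1}{z_i}.$$ Moreover, for $m=n-1$ this probability equals $1/|\mathrm{Aut}(P)|$.
   Context: A pattern $P$ is a finite simple connected graph on $n$ labeled vertices; $\mathrm{Aut}(P)$ is its automorphism group (bijections $V(P)\to V(P)$ preserving adjacency and non-adjacency). A schedule for $P$ is a sequence $S=(S[0],\dots,S[n-1])$ listing every vertex of $P$ exactly once such that each $S[k]$ with $k\ge 1$ is adjacent in $P$ to some $S[j]$ with $j<k$. Restriction set: $L=\{(S[i],x(S[i])) : 0\le i<n,\ x\in\mathrm{Aut}(P),\ x(S[j])=S[j]\text{ for all } j<i,\ x(S[i])\ne S[i]\}$; every pair in $L$ has the form $(S[a],S[b])$ with $a<b$. Reduced relation set $L'$: for each $k$ such that some $(S[z],S[k])\in L$, let $c_k$ be the largest such $z$ (so $c_k<k$); $L'=\{(S[c_k],S[k])\}$. For $k$ with no such pair, $c_k$ is undefined. *)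

theory Defs
  imports "HOL-Probability.Probability"
begin

definition is_pattern :: "(nat \<Rightarrow> nat \<Rightarrow> bool) \<Rightarrow> nat \<Rightarrow> bool" where
  "is_pattern E n \<longleftrightarrow>
     (\<forall>u v. E u v \<longrightarrow> u < n \<and> v < n) \<and>
     (\<forall>u v. E u v \<longrightarrow> E v u) \<and>
     (\<forall>u. \<not> E u u) \<and>
     (\<forall>u<n. \<forall>v<n. E\<^sup>*\<^sup>* u v)"

definition aut :: "(nat \<Rightarrow> nat \<Rightarrow> bool) \<Rightarrow> nat \<Rightarrow> (nat \<Rightarrow> nat) set" where
  "aut E n = {f. bij_betw f {..<n} {..<n} \<and> (\<forall>x. n \<le> x \<longrightarrow> f x = x) \<and>
                 (\<forall>u<n. \<forall>v<n. E (f u) (f v) \<longleftrightarrow> E u v)}"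

definition is_schedule :: "(nat \<Rightarrow> nat \<Rightarrow> bool) \<Rightarrow> nat \<Rightarrow> nat list \<Rightarrow> bool" where
  "is_schedule E n S \<longleftrightarrow> length S = n \<and> distinct S \<and> set S = {..<n} \<and>
     (\<forall>k. 0 < k \<and> k < n \<longrightarrow> (\<exists>j<k. E (S ! j) (S ! k)))"

definition restr_set :: "(nat \<Rightarrow> nat \<Rightarrow> bool) \<Rightarrow> nat \<Rightarrow> nat list \<Rightarrow> (nat \<times> nat) set" where
  "restr_set E n S = {(S ! i, f (S ! i)) | i f. i < n \<and> f \<in> aut E n \<and>
       (\<forall>j<i. f (S ! j) = S ! j) \<and> f (S ! i) \<noteq> S ! i}"

definition has_c :: "(nat \<Rightarrow> nat \<Rightarrow> bool) \<Rightarrow> nat \<Rightarrow> nat list \<Rightarrow> nat \<Rightarrow> bool" where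
  "has_c E n S k \<longleftrightarrow> k < n \<and> (\<exists>z<n. (S ! z, S ! k) \<in> restr_set E n S)"

definition cidx :: "(nat \<Rightarrow> nat \<Rightarrow> bool) \<Rightarrow> nat \<Rightarrow> nat list \<Rightarrow> nat \<Rightarrow> nat" where
  "cidx E n S k = Max {z. z < n \<and> (S ! z, S ! k) \<in> restr_set E n S}"

definition reduced_set :: "(nat \<Rightarrow> nat \<Rightarrow> bool) \<Rightarrow> nat \<Rightarrow> nat list \<Rightarrow> (nat \<times> nat) set" where
  "reduced_set E n S = {(S ! cidx E n S k, S ! k) | k. has_c E n S k}"

definition cparent :: "(nat \<Rightarrow> nat \<Rightarrow> bool) \<Rightarrow> nat \<Rightarrow> nat list \<Rightarrow> (nat \<times> nat) set" where
  "cparent E n S = {(cidx E n S k, k) | k. has_c E n S k}"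

definition zcount :: "(nat \<Rightarrow> nat \<Rightarrow> bool) \<Rightarrow> nat \<Rightarrow> nat list \<Rightarrow> nat \<Rightarrow> nat \<Rightarrow> nat" where
  "zcount E n S m i = card {j. j \<le> m \<and> (i, j) \<in> (cparent E n S)\<^sup>*}"

end

theory Submission
  imports Defs
begin

lemma pow_int_lborel:
  fixes t :: real and a :: nat
  assumes "0 \<le> t"
  shows "(\<integral>\<^sup>+ y. ennreal (y ^ a) * indicator {0<..<t} y \<partial>lborel) = ennreal (t ^ (a+1) / (a+1))"
proof -
  have "((\<lambda>y. y ^ a) has_integral (t ^ (a+1) / (a+1) - 0 ^ (a+1) / (a+1))) {0..t}"
  proof (rule fundamental_theorem_of_calculus)
    show "0 \<le> t" using assms .
    fix x :: real
    have "((\<lambda>y. y ^ (a+1) / real (a+1)) has_real_derivative x ^ a) (at x)"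
      by (rule derivative_eq_intros refl | simp)+
    then show "((\<lambda>y. y ^ (a+1) / real (a+1)) has_vector_derivative x ^ a) (at x within {0..t})"
      using has_real_derivative_iff_has_vector_derivative has_vector_derivative_at_within by blast
  qed
  then have "((\<lambda>y. y ^ a) has_integral (t ^ (a+1) / (a+1))) {0<..<t}"
    by (simp add: has_integral_Icc_iff_Ioo)
  from nn_integral_has_integral_lebesgue[OF _ this]
  have "(\<integral>\<^sup>+ y. ennreal (indicator {0<..<t} y * y ^ a) \<partial>lborel) = ennreal (t ^ (a+1) / (a+1))"
    by simp
  moreover have "(\<integral>\<^sup>+ y. ennreal (y ^ a) * indicator {0<..<t} y \<partial>lborel) = (\<integral>\<^sup>+ y. ennreal (indicator {0<..<t} y * y ^ a) \<partial>lborel)"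
    by (intro nn_integral_cong) (simp split: split_indicator)
  ultimately show ?thesis by simp
qed

abbreviation "UU \<equiv> uniform_measure lborel {0<..<(1::real)}"

lemma prob_UU: "prob_space UU"
  by (rule prob_space_uniform_measure) auto

lemma UU_int_lt:
  fixes t :: real and a :: nat
  assumes "0 < t" "t < 1"
  shows "(\<integral>\<^sup>+ y. ennreal (y ^ a) * indicator {..<t} y \<partial>UU) = ennreal (t ^ (a+1) / (a+1))"
proof -
  have "(\<integral>\<^sup>+ y. ennreal (y ^ a) * indicator {..<t} y \<partial>UU)
     = (\<integral>\<^sup>+ y. ennreal (y ^ a) * indicator {..<t} y * indicator {0<..<1} y \<partial>lborel) / emeasure lborel {0<..<(1::real)}"
    by (rule nn_integral_uniform_measure) auto
  also have "\<dots> = (\<integral>\<^sup>+ y. ennreal (y ^ a) * indicator {0<..<t} y \<partial>lborel)"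
    using assms by (simp add: divide_ennreal_def, intro nn_integral_cong) (auto split: split_indicator)
  also have "\<dots> = ennreal (t ^ (a+1) / (a+1))"
    using assms by (intro pow_int_lborel) auto
  finally show ?thesis .
qed

lemma UU_int:
  fixes a :: nat
  shows "(\<integral>\<^sup>+ y. ennreal (y ^ a) \<partial>UU) = ennreal (1 / (a+1))"
proof -
  have "(\<integral>\<^sup>+ y. ennreal (y ^ a) \<partial>UU)
     = (\<integral>\<^sup>+ y. ennreal (y ^ a) * indicator {0<..<1} y \<partial>lborel) / emeasure lborel {0<..<(1::real)}"
    by (rule nn_integral_uniform_measure) auto
  also have "\<dots> = ennreal (1 ^ (a+1) / (a+1))"
    using pow_int_lborel[of 1 a] by (simp add: divide_ennreal_def)
  finally show ?thesis by (simp add: divide_ennreal_def)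
qed

definition Rel :: "(nat \<Rightarrow> bool) \<Rightarrow> (nat \<Rightarrow> nat) \<Rightarrow> (nat \<times> nat) set" where
  "Rel hc c = {(c k, k) | k. hc k}"

definition wt :: "(nat \<Rightarrow> bool) \<Rightarrow> (nat \<Rightarrow> nat) \<Rightarrow> (nat \<Rightarrow> nat) \<Rightarrow> nat \<Rightarrow> nat \<Rightarrow> nat" where
  "wt hc c a m i = (\<Sum>j \<in> {j. j < m \<and> (i,j) \<in> (Rel hc c)\<^sup>*}. a j + 1)"

definition FF :: "(nat \<Rightarrow> bool) \<Rightarrow> (nat \<Rightarrow> nat) \<Rightarrow> (nat \<Rightarrow> nat) \<Rightarrow> nat \<Rightarrow> (nat \<Rightarrow> real) \<Rightarrow> ennreal" where
  "FF hc c a m x = (\<Prod>i<m. ennreal (x i ^ a i) * (if hc i \<longrightarrow> x i < x (c i) then 1 else 0))"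

lemma Rel_le:
  assumes hcl: "\<forall>k. hc k \<longrightarrow> c k < k" and "(i,j) \<in> (Rel hc c)\<^sup>*"
  shows "i \<le> j"
  using assms(2)
proof (induction rule: rtrancl_induct)
  case base then show ?case by simp
next
  case (step y z) then show ?case using hcl by (auto simp: Rel_def)
qed

lemma Rel_last:
  assumes hcl: "\<forall>k. hc k \<longrightarrow> c k < k" and "i \<noteq> m"
  shows "(i,m) \<in> (Rel hc c)\<^sup>* \<longleftrightarrow> hc m \<and> (i, c m) \<in> (Rel hc c)\<^sup>*"
proof
  assume "(i,m) \<in> (Rel hc c)\<^sup>*"
  then show "hc m \<and> (i, c m) \<in> (Rel hc c)\<^sup>*"
    using assms(2) by (cases rule: rtrancl.cases) (auto simp: Rel_def)
next
  assume "hc m \<and> (i, c m) \<in> (Rel hc c)\<^sup>*"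
  then show "(i,m) \<in> (Rel hc c)\<^sup>*"
    by (auto simp: Rel_def intro: rtrancl_into_rtrancl)
qed

lemma wt_last:
  assumes hcl: "\<forall>k. hc k \<longrightarrow> c k < k"
  shows "wt hc c a (Suc m) m = a m + 1"
proof -
  have "{j. j < Suc m \<and> (m,j) \<in> (Rel hc c)\<^sup>*} = {m}"
    using Rel_le[OF hcl] by fastforce
  then show ?thesis by (simp add: wt_def)
qed

lemma wt_step:
  assumes hcl: "\<forall>k. hc k \<longrightarrow> c k < k" and im: "i < m"
  shows "wt hc c a (Suc m) i = wt hc c (if hc m then a(c m := a (c m) + a m + 1) else a) m i"
proof -
  let ?R = "(Rel hc c)\<^sup>*"
  define J where "J = {j. j < m \<and> (i,j) \<in> ?R}"
  have fJ: "finite J" by (simp add: J_def)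
  have mJ: "m \<notin> J" by (simp add: J_def)
  have A: "wt hc c a (Suc m) i = wt hc c a m i + (if (i,m) \<in> ?R then a m + 1 else 0)"
  proof (cases "(i,m) \<in> ?R")
    case True
    then have "{j. j < Suc m \<and> (i,j) \<in> ?R} = insert m J" by (auto simp: J_def less_Suc_eq)
    then show ?thesis using True fJ mJ by (simp add: wt_def J_def[symmetric])
  next
    case False
    then have "{j. j < Suc m \<and> (i,j) \<in> ?R} = J" by (auto simp: J_def less_Suc_eq)
    then show ?thesis using False by (simp add: wt_def J_def[symmetric])
  qed
  show ?thesis
  proof (cases "hc m")
    case True
    have cm: "c m < m" using hcl True by auto
    have "wt hc c (a(c m := a (c m) + a m + 1)) m i = (\<Sum>j\<in>J. (a j + 1) + (if j = c m then a m + 1 else 0))"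
      unfolding wt_def J_def[symmetric] by (intro sum.cong) auto
    also have "\<dots> = wt hc c a m i + (if c m \<in> J then a m + 1 else 0)"
      unfolding sum.distrib wt_def J_def[symmetric] using fJ sum.delta[OF fJ, of "c m" "\<lambda>_. a m + 1"] by (simp add: eq_commute)
    also have "(c m \<in> J) = ((i,m) \<in> ?R)"
      using Rel_last[OF hcl, of i m] im True cm by (auto simp: J_def)
    finally show ?thesis using A True by (simp add: fun_upd_def)
  next
    case False
    then have "(i,m) \<notin> ?R" using Rel_last[OF hcl, of i m] im by auto
    then show ?thesis using A False by simp
  qed
qed

lemma FF_meas:
  assumes hcl: "\<forall>k. hc k \<longrightarrow> c k < k"
  shows "FF hc c a m \<in> borel_measurable (PiM {..<m} (\<lambda>_. UU))"
  unfolding FF_def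
proof (intro borel_measurable_prod_ennreal)
  fix i assume i: "i \<in> {..<m}"
  show "(\<lambda>x. ennreal (x i ^ a i) * (if hc i \<longrightarrow> x i < x (c i) then 1 else 0)) \<in> borel_measurable (PiM {..<m} (\<lambda>_. UU))"
  proof (cases "hc i")
    case True
    then have ci: "c i \<in> {..<m}" using hcl[rule_format, OF True] i by simp
    have "(\<lambda>x. (if x i < x (c i) then 1 else 0 :: ennreal)) \<in> borel_measurable (PiM {..<m} (\<lambda>_. UU))"
      using i ci by measurable
    moreover have "(\<lambda>x. ennreal (x i ^ a i) * (if hc i \<longrightarrow> x i < x (c i) then 1 else 0)) = (\<lambda>x. ennreal (x i ^ a i) * (if x i < x (c i) then 1 else 0 :: ennreal))"
      using True by simp
    moreover have "(\<lambda>x. ennreal (x i ^ a i)) \<in> borel_measurable (PiM {..<m} (\<lambda>_. UU))"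
      using i by measurable
    ultimately show ?thesis by simp
  next
    case False
    have "(\<lambda>x. ennreal (x i ^ a i)) \<in> borel_measurable (PiM {..<m} (\<lambda>_. UU))"
      using i by measurable
    then show ?thesis using False by simp
  qed
qed

lemma UU_AE: "AE y in UU. y \<in> {0<..<1}"
  by (rule AE_uniform_measureI) auto

lemma PiM_AE: fixes m :: nat shows "AE x in PiM {..<m} (\<lambda>_. UU). \<forall>i\<in>{..<m}. x i \<in> {0<..<1}"
proof (rule eventually_ball_finite)
  show "\<forall>i\<in>{..<m}. AE x in PiM {..<m} (\<lambda>_. UU). x i \<in> {0<..<1}"
  proof
    fix i assume i: "i \<in> {..<m}"
    show "AE x in PiM {..<m} (\<lambda>_. UU). x i \<in> {0<..<1}"
      by (rule AE_PiM_component[OF prob_UU i UU_AE])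
  qed
qed simp

lemma FF_upd:
  assumes hcl: "\<forall>k. hc k \<longrightarrow> c k < k"
  shows "FF hc c a (Suc m) (x(m := y)) = FF hc c a m x * (ennreal (y ^ a m) * (if hc m \<longrightarrow> y < x (c m) then 1 else 0))"
proof -
  have "FF hc c a m (x(m := y)) = FF hc c a m x"
    unfolding FF_def
    by (intro prod.cong refl) (use hcl in fastforce)
  moreover have "c m \<noteq> m" if "hc m" using hcl that by fastforce
  ultimately show ?thesis
    unfolding FF_def by (auto simp: FF_def)
qed

lemma FF_a':
  assumes hcl: "\<forall>k. hc k \<longrightarrow> c k < k" and hm: "hc m" and xp: "0 \<le> x (c m)"
  shows "FF hc c (a(c m := a (c m) + a m + 1)) m x = FF hc c a m x * ennreal (x (c m) ^ (a m + 1))"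
proof -
  define p where "p = c m"
  define b where "b = a(p := a p + a m + 1)"
  have p: "p \<in> {..<m}" using hcl hm by (auto simp: p_def)
  define g where "g = (\<lambda>b i. ennreal (x i ^ b i) * (if hc i \<longrightarrow> x i < x (c i) then 1 else (0::ennreal)))"
  have FFg: "FF hc c d m x = (\<Prod>i\<in>{..<m}. g d i)" for d by (simp add: FF_def g_def)
  have e1: "FF hc c b m x = g b p * (\<Prod>i\<in>{..<m} - {p}. g b i)"
    unfolding FFg by (rule prod.remove[OF _ p]) simp
  have e2: "(\<Prod>i\<in>{..<m} - {p}. g b i) = (\<Prod>i\<in>{..<m} - {p}. g a i)"
    by (intro prod.cong) (auto simp: g_def b_def)
  have e3: "g b p = g a p * ennreal (x p ^ (a m + 1))"
    using xp by (simp add: g_def b_def p_def power_add ennreal_mult mult_ac)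
  have e4: "FF hc c a m x = g a p * (\<Prod>i\<in>{..<m} - {p}. g a i)"
    unfolding FFg by (rule prod.remove[OF _ p]) simp
  show ?thesis unfolding p_def[symmetric] unfolding b_def[symmetric] e1 e2 e3 e4 by (simp only: mult_ac)
qed

lemma FF_int:
  assumes hcl: "\<forall>k. hc k \<longrightarrow> c k < k"
  shows "(\<integral>\<^sup>+ x. FF hc c a m x \<partial>PiM {..<m} (\<lambda>_. UU)) = ennreal (\<Prod>i<m. 1 / real (wt hc c a m i))"
proof (induction m arbitrary: a)
  case 0
  interpret P: prob_space "PiM ({}::nat set) (\<lambda>_. UU)" by (intro prob_space_PiM prob_UU)
  have "FF hc c a 0 = (\<lambda>_. 1)" by (simp add: FF_def fun_eq_iff)
  then show ?case by (simp add: P.emeasure_space_1)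
next
  case (Suc m)
  define a' where "a' = (if hc m then a(c m := a (c m) + a m + 1) else a)"
  let ?P = "PiM {..<m} (\<lambda>_. UU)"
  interpret product_sigma_finite "\<lambda>_::nat. UU"
    by (simp add: product_sigma_finite_def prob_space_imp_sigma_finite prob_UU)
  have "(\<integral>\<^sup>+ x. FF hc c a (Suc m) x \<partial>PiM {..<Suc m} (\<lambda>_. UU))
      = (\<integral>\<^sup>+ x. (\<integral>\<^sup>+ y. FF hc c a (Suc m) (x(m := y)) \<partial>UU) \<partial>?P)"
    using product_nn_integral_insert[of "{..<m}" m "FF hc c a (Suc m)"] FF_meas[OF hcl, of a "Suc m"]
    by (simp add: lessThan_Suc)
  also have "\<dots> = (\<integral>\<^sup>+ x. FF hc c a' m x * ennreal (1 / (a m + 1)) \<partial>?P)"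
  proof (rule nn_integral_cong_AE)
    show "AE x in ?P. (\<integral>\<^sup>+ y. FF hc c a (Suc m) (x(m := y)) \<partial>UU) = FF hc c a' m x * ennreal (1 / (a m + 1))"
      using PiM_AE[of m]
    proof eventually_elim
      fix x :: "nat \<Rightarrow> real" assume x: "\<forall>i\<in>{..<m}. x i \<in> {0<..<1}"
      have "(\<integral>\<^sup>+ y. FF hc c a (Suc m) (x(m := y)) \<partial>UU)
          = FF hc c a m x * (\<integral>\<^sup>+ y. ennreal (y ^ a m) * (if hc m \<longrightarrow> y < x (c m) then 1 else 0) \<partial>UU)"
        unfolding FF_upd[OF hcl] by (rule nn_integral_cmult) measurable
      also have "\<dots> = FF hc c a' m x * ennreal (1 / (a m + 1))"
      proof (cases "hc m")
        case True
        have p: "c m < m" using hcl True by auto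
        then have xp: "x (c m) \<in> {0<..<1}" using x by auto
        have "(\<integral>\<^sup>+ y. ennreal (y ^ a m) * (if hc m \<longrightarrow> y < x (c m) then 1 else 0) \<partial>UU)
            = (\<integral>\<^sup>+ y. ennreal (y ^ a m) * indicator {..<x (c m)} y \<partial>UU)"
          using True by (intro nn_integral_cong) (simp split: split_indicator)
        also have "\<dots> = ennreal (x (c m) ^ (a m + 1) / (a m + 1))"
          using xp by (intro UU_int_lt) auto
        also have "\<dots> = ennreal (x (c m) ^ (a m + 1)) * ennreal (1 / (a m + 1))"
          using xp by (simp add: ennreal_mult[symmetric])
        finally show ?thesis
          using FF_a'[OF hcl True, of x a] xp True by (simp add: a'_def mult_ac)
      next
        case False
        then show ?thesis using UU_int[of "a m"] by (simp add: a'_def)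
      qed
      finally show "(\<integral>\<^sup>+ y. FF hc c a (Suc m) (x(m := y)) \<partial>UU) = FF hc c a' m x * ennreal (1 / (a m + 1))" .
    qed
  qed
  also have "\<dots> = (\<integral>\<^sup>+ x. FF hc c a' m x \<partial>?P) * ennreal (1 / (a m + 1))"
    by (rule nn_integral_multc) (rule FF_meas[OF hcl])
  also have "\<dots> = ennreal (\<Prod>i<m. 1 / real (wt hc c a' m i)) * ennreal (1 / (a m + 1))"
    by (simp add: Suc.IH)
  also have "\<dots> = ennreal ((\<Prod>i<m. 1 / real (wt hc c a' m i)) * (1 / (a m + 1)))"
    by (rule ennreal_mult[symmetric]) (auto intro: prod_nonneg)
  also have "(\<Prod>i<m. 1 / real (wt hc c a' m i)) = (\<Prod>i<m. 1 / real (wt hc c a (Suc m) i))"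
    by (intro prod.cong refl) (simp add: a'_def wt_step[OF hcl])
  also have "(\<Prod>i<m. 1 / real (wt hc c a (Suc m) i)) * (1 / (a m + 1)) = (\<Prod>i<Suc m. 1 / real (wt hc c a (Suc m) i))"
    by (simp add: wt_last[OF hcl])
  finally show ?case .
qed


lemma aut_lt: "f \<in> aut E n \<Longrightarrow> x < n \<Longrightarrow> f x < n"
  unfolding aut_def bij_betw_def by auto

lemma aut_out: "f \<in> aut E n \<Longrightarrow> n \<le> x \<Longrightarrow> f x = x"
  unfolding aut_def mem_Collect_eq by blast

lemma aut_bb: "f \<in> aut E n \<Longrightarrow> bij_betw f {..<n} {..<n}"
  unfolding aut_def mem_Collect_eq by blast

lemma aut_E: "f \<in> aut E n \<Longrightarrow> u < n \<Longrightarrow> v < n \<Longrightarrow> E (f u) (f v) \<longleftrightarrow> E u v"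
  unfolding aut_def mem_Collect_eq by blast

lemma aut_I: "bij_betw f {..<n} {..<n} \<Longrightarrow> (\<And>x. n \<le> x \<Longrightarrow> f x = x) \<Longrightarrow> (\<And>u v. u < n \<Longrightarrow> v < n \<Longrightarrow> E (f u) (f v) \<longleftrightarrow> E u v) \<Longrightarrow> f \<in> aut E n"
  unfolding aut_def mem_Collect_eq by blast

lemma aut_bij: assumes f: "f \<in> aut E n" shows "bij f"
proof -
  have b: "bij_betw f {..<n} {..<n}" using aut_bb[OF f] .
  then have ib: "inj_on f {..<n}" and im: "f ` {..<n} = {..<n}" by (auto simp: bij_betw_def)
  have "inj f"
  proof (rule injI)
    fix x y assume xy: "f x = f y"
    show "x = y"
    proof (cases "x < n")
      case xn: True
      show ?thesis
      proof (cases "y < n")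
        case True
        show ?thesis using inj_onD[OF ib xy] xn True by blast
      next
        case False
        have "f y = y" using aut_out[OF f] False by (meson not_le)
        moreover have "f x < n" using aut_lt[OF f xn] .
        ultimately show ?thesis using xy False by linarith
      qed
    next
      case xn: False
      have fx: "f x = x" using aut_out[OF f] xn by (meson not_le)
      show ?thesis
      proof (cases "y < n")
        case True
        have "f y < n" using aut_lt[OF f True] .
        then show ?thesis using xy fx xn by linarith
      next
        case False
        have "f y = y" using aut_out[OF f] False by (meson not_le)
        then show ?thesis using xy fx by simp
      qed
    qed
  qed
  moreover have "surj f"
  proof -
    have "y \<in> range f" for y
    proof (cases "y < n")
      case True
      then have "y \<in> f ` {..<n}" using im by simp
      then show ?thesis by blast
    next
      case False
      then have "f y = y" using aut_out[OF f, of y] by simp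
      then show ?thesis by (metis rangeI)
    qed
    then show ?thesis by blast
  qed
  ultimately show ?thesis by (simp add: bij_def)
qed

lemma aut_id: "id \<in> aut E n"
  by (rule aut_I) auto

lemma aut_comp: assumes f: "f \<in> aut E n" and g: "g \<in> aut E n" shows "f \<circ> g \<in> aut E n"
proof (rule aut_I)
  show "bij_betw (f \<circ> g) {..<n} {..<n}" using aut_bb[OF f] aut_bb[OF g] by (rule bij_betw_trans[rotated])
  show "(f \<circ> g) x = x" if "n \<le> x" for x using aut_out[OF f that] aut_out[OF g that] by simp
  show "E ((f \<circ> g) u) ((f \<circ> g) v) \<longleftrightarrow> E u v" if "u < n" "v < n" for u v
    using aut_E[OF f aut_lt[OF g that(1)] aut_lt[OF g that(2)]] aut_E[OF g that] by simp
qed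

lemma aut_inv: assumes f: "f \<in> aut E n" shows "inv f \<in> aut E n"
proof -
  have bf: "bij f" by (rule aut_bij[OF f])
  have im: "f ` {..<n} = {..<n}" using aut_bb[OF f] unfolding bij_betw_def by blast
  have "inv f ` (f ` {..<n}) = {..<n}" by (rule image_inv_f_f[OF bij_is_inj[OF bf]])
  then have im2: "inv f ` {..<n} = {..<n}" unfolding im .
  have "inj (inv f)" using bij_imp_bij_inv[OF bf] by (rule bij_is_inj)
  then have binv: "bij_betw (inv f) {..<n} {..<n}" using im2 unfolding bij_betw_def
    by (blast intro: inj_on_subset)
  show ?thesis
  proof (rule aut_I)
    show "bij_betw (inv f) {..<n} {..<n}" by (rule binv)
    show "inv f x = x" if "n \<le> x" for x
      by (rule inv_f_eq[OF bij_is_inj[OF bf] aut_out[OF f that]])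
    show "E (inv f u) (inv f v) \<longleftrightarrow> E u v" if "u < n" "v < n" for u v
    proof -
      have "inv f u \<in> inv f ` {..<n}" "inv f v \<in> inv f ` {..<n}" using that by auto
      then have "inv f u < n" "inv f v < n" unfolding im2 by auto
      then have "E (f (inv f u)) (f (inv f v)) \<longleftrightarrow> E (inv f u) (inv f v)" by (rule aut_E[OF f])
      moreover have "f (inv f u) = u" "f (inv f v) = v"
        using surj_f_inv_f[OF bij_is_surj[OF bf]] by blast+
      ultimately show ?thesis by simp
    qed
  qed
qed

lemma aut_finite: "finite (aut E n)"
proof -
  have "inj_on (\<lambda>f. restrict f {..<n}) (aut E n)"
  proof (rule inj_onI)
    fix f g assume f: "f \<in> aut E n" and g: "g \<in> aut E n" and eq: "restrict f {..<n} = restrict g {..<n}"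
    show "f = g"
    proof
      fix x show "f x = g x"
      proof (cases "x < n")
        case True then show ?thesis using eq by (metis lessThan_iff restrict_apply')
      next
        case False then show ?thesis using aut_out[OF f] aut_out[OF g] by simp
      qed
    qed
  qed
  moreover have "(\<lambda>f. restrict f {..<n}) ` aut E n \<subseteq> PiE {..<n} (\<lambda>_. {..<n})"
  proof (rule image_subsetI)
    fix f assume f: "f \<in> aut E n"
    show "restrict f {..<n} \<in> PiE {..<n} (\<lambda>_. {..<n})"
      unfolding restrict_PiE_iff using aut_lt[OF f] by simp
  qed
  moreover have "finite (PiE {..<n} (\<lambda>_. {..<n::nat}))" by (simp add: finite_PiE)
  ultimately have "finite ((\<lambda>f. restrict f {..<n}) ` aut E n)"
    using finite_subset by blast
  then show ?thesis using \<open>inj_on (\<lambda>f. restrict f {..<n}) (aut E n)\<close> by (rule finite_imageD)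
qed


definition Gs :: "(nat \<Rightarrow> nat \<Rightarrow> bool) \<Rightarrow> nat \<Rightarrow> nat list \<Rightarrow> nat \<Rightarrow> (nat \<Rightarrow> nat) set" where
  "Gs E n S i = {f \<in> aut E n. \<forall>j<i. f (S ! j) = S ! j}"

definition Orb :: "(nat \<Rightarrow> nat \<Rightarrow> bool) \<Rightarrow> nat \<Rightarrow> nat list \<Rightarrow> nat \<Rightarrow> nat set" where
  "Orb E n S i = (\<lambda>f. f (S ! i)) ` Gs E n S i"

lemma cparent_Rel: "cparent E n S = Rel (has_c E n S) (cidx E n S)"
  by (simp add: cparent_def Rel_def)

context
  fixes E n S
  assumes sch: "is_schedule E n S"
begin

lemma S_len: "length S = n" and S_dist: "distinct S" and S_set: "set S = {..<n}"
  using sch by (auto simp: is_schedule_def)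

lemma S_lt: "j < n \<Longrightarrow> S ! j < n"
  using S_len S_set nth_mem by fastforce

lemma S_inj: "j < n \<Longrightarrow> k < n \<Longrightarrow> S ! j = S ! k \<longleftrightarrow> j = k"
  using S_len S_dist by (simp add: nth_eq_iff_index_eq)

lemma S_surj: "x < n \<Longrightarrow> \<exists>j<n. S ! j = x"
  using S_len S_set by (metis in_set_conv_nth lessThan_iff)

lemma restr_mem:
  "(u, v) \<in> restr_set E n S \<longleftrightarrow> (\<exists>i f. u = S ! i \<and> v = f (S ! i) \<and> i < n \<and> f \<in> aut E n \<and>
       (\<forall>j<i. f (S ! j) = S ! j) \<and> f (S ! i) \<noteq> S ! i)"
  unfolding restr_set_def mem_Collect_eq by auto

lemma restr_iff:
  assumes z: "z < n"
  shows "(S ! z, v) \<in> restr_set E n S \<longleftrightarrow> (\<exists>f\<in>Gs E n S z. f (S ! z) = v \<and> v \<noteq> S ! z)"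
proof
  assume "(S ! z, v) \<in> restr_set E n S"
  then obtain i f where eq1: "S ! z = S ! i" and eq2: "v = f (S ! i)" and i: "i < n" and fa: "f \<in> aut E n"
    and ffix: "\<forall>j<i. f (S ! j) = S ! j" and fne: "f (S ! i) \<noteq> S ! i"
    unfolding restr_mem by (elim exE conjE)
  have iz: "i = z" using eq1 S_inj[OF z i] by simp
  have "f \<in> Gs E n S z" unfolding Gs_def using fa ffix iz by blast
  moreover have "f (S ! z) = v \<and> v \<noteq> S ! z" using eq2 fne iz by simp
  ultimately show "\<exists>f\<in>Gs E n S z. f (S ! z) = v \<and> v \<noteq> S ! z" by blast
next
  assume "\<exists>f\<in>Gs E n S z. f (S ! z) = v \<and> v \<noteq> S ! z"
  then obtain f where f: "f \<in> Gs E n S z" and fv: "f (S ! z) = v" and vne: "v \<noteq> S ! z" by blast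
  have fa: "f \<in> aut E n" and ffix: "\<forall>j<z. f (S ! j) = S ! j" using f unfolding Gs_def by blast+
  show "(S ! z, v) \<in> restr_set E n S"
    unfolding restr_mem
    apply (rule exI[of _ z], rule exI[of _ f])
    using z fa ffix fv vne by simp
qed

lemma Gs_mono: "i \<le> j \<Longrightarrow> Gs E n S j \<subseteq> Gs E n S i"
  unfolding Gs_def by auto

lemma restr_lt:
  assumes z: "z < n" and k: "k < n" and r: "(S ! z, S ! k) \<in> restr_set E n S"
  shows "z < k"
proof -
  obtain f where f: "f \<in> Gs E n S z" "f (S ! z) = S ! k" "S ! k \<noteq> S ! z"
    using r restr_iff[OF z] by blast
  have kz: "k \<noteq> z" using f(3) by auto
  have fa: "f \<in> aut E n" and ffix: "\<forall>j<z. f (S ! j) = S ! j" using f(1) unfolding Gs_def by blast+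
  show ?thesis
  proof (rule ccontr)
    assume "\<not> z < k"
    then have "k < z" using kz by simp
    then have "f (S ! k) = S ! k" using ffix by blast
    then have "f (S ! k) = f (S ! z)" using f(2) by simp
    moreover have "inj f" by (rule bij_is_inj[OF aut_bij[OF fa]])
    ultimately have "S ! k = S ! z" by (simp add: inj_eq)
    then show False using f(3) by simp
  qed
qed

lemma cidx_props:
  assumes h: "has_c E n S k"
  shows "cidx E n S k < k" "(S ! cidx E n S k, S ! k) \<in> restr_set E n S" "cidx E n S k < n"
    "\<And>z. z < n \<Longrightarrow> (S ! z, S ! k) \<in> restr_set E n S \<Longrightarrow> z \<le> cidx E n S k"
proof -
  let ?Z = "{z. z < n \<and> (S ! z, S ! k) \<in> restr_set E n S}"
  have kn: "k < n" and ne: "?Z \<noteq> {}" using h by (auto simp: has_c_def)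
  have fin: "finite ?Z" by simp
  have mem: "cidx E n S k \<in> ?Z" unfolding cidx_def using Max_in[OF fin ne] .
  then show "(S ! cidx E n S k, S ! k) \<in> restr_set E n S" "cidx E n S k < n" by auto
  then show "cidx E n S k < k" using restr_lt[OF _ kn] by blast
  show "\<And>z. z < n \<Longrightarrow> (S ! z, S ! k) \<in> restr_set E n S \<Longrightarrow> z \<le> cidx E n S k"
  proof -
    fix z assume "z < n" "(S ! z, S ! k) \<in> restr_set E n S"
    then have "z \<in> ?Z" by simp
    then show "z \<le> cidx E n S k" unfolding cidx_def by (rule Max_ge[OF fin])
  qed
qed

lemma hcl: "\<forall>k. has_c E n S k \<longrightarrow> cidx E n S k < k"
  using cidx_props(1) by blast


abbreviation "RR \<equiv> (cparent E n S)\<^sup>*"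

lemma Gs_aut: "f \<in> Gs E n S i \<Longrightarrow> f \<in> aut E n"
  unfolding Gs_def by blast

lemma Gs_fix: "f \<in> Gs E n S i \<Longrightarrow> j < i \<Longrightarrow> f (S ! j) = S ! j"
  unfolding Gs_def by blast

lemma Gs_I: "f \<in> aut E n \<Longrightarrow> (\<And>j. j < i \<Longrightarrow> f (S ! j) = S ! j) \<Longrightarrow> f \<in> Gs E n S i"
  unfolding Gs_def by blast

lemma Gs_comp: "f \<in> Gs E n S i \<Longrightarrow> g \<in> Gs E n S i \<Longrightarrow> f \<circ> g \<in> Gs E n S i"
  by (rule Gs_I) (auto intro: aut_comp Gs_aut simp: Gs_fix)

lemma Gs_inv: assumes f: "f \<in> Gs E n S i" shows "inv f \<in> Gs E n S i"
proof (rule Gs_I)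
  show "inv f \<in> aut E n" by (rule aut_inv[OF Gs_aut[OF f]])
  fix j assume "j < i"
  then have "f (S ! j) = S ! j" by (rule Gs_fix[OF f])
  then show "inv f (S ! j) = S ! j" by (rule inv_f_eq[OF bij_is_inj[OF aut_bij[OF Gs_aut[OF f]]]])
qed

lemma Gs_id: "id \<in> Gs E n S i"
  by (rule Gs_I[OF aut_id]) simp

lemma RR_le: "(i, k) \<in> RR \<Longrightarrow> i \<le> k"
  unfolding cparent_Rel by (rule Rel_le[OF hcl])

lemma orb_back:
  assumes "(i, k) \<in> RR" "i < n"
  shows "S ! k \<in> Orb E n S i"
  using assms(1)
proof (induction rule: rtrancl_induct)
  case base
  show ?case unfolding Orb_def by (rule image_eqI[of _ _ id]) (simp_all add: Gs_id)
next
  case (step y z)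
  from step.hyps(2) have hz: "has_c E n S z" and yz: "y = cidx E n S z"
    unfolding cparent_def by auto
  have yn: "y < n" using cidx_props(3)[OF hz] yz by simp
  obtain f where f: "f \<in> Gs E n S y" "f (S ! y) = S ! z"
    using cidx_props(2)[OF hz] restr_iff[OF yn] yz by blast
  obtain g where g: "g \<in> Gs E n S i" "g (S ! i) = S ! y"
    using step.IH unfolding Orb_def image_iff by metis
  have "i \<le> y" using RR_le step.hyps(1) by blast
  then have "f \<in> Gs E n S i" using Gs_mono f(1) by blast
  then have "f \<circ> g \<in> Gs E n S i" using g(1) by (rule Gs_comp)
  moreover have "(f \<circ> g) (S ! i) = S ! z" using f g by simp
  ultimately show ?case unfolding Orb_def by (metis image_eqI)
qed

lemma orb_fwd:
  assumes "k < n" "S ! k \<in> Orb E n S i" "i < n"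
  shows "(i, k) \<in> RR"
  using assms
proof (induction k rule: less_induct)
  case (less k)
  show ?case
  proof (cases "k = i")
    case True then show ?thesis by simp
  next
    case False
    obtain g where g: "g \<in> Gs E n S i" "g (S ! i) = S ! k"
      using less.prems(2) unfolding Orb_def image_iff by metis
    have ne: "S ! k \<noteq> S ! i" using S_inj[OF less.prems(1) less.prems(3)] False by simp
    have r: "(S ! i, S ! k) \<in> restr_set E n S" using restr_iff[OF less.prems(3)] g ne by blast
    have hk: "has_c E n S k" unfolding has_c_def using less.prems(1,3) r by blast
    define p where "p = cidx E n S k"
    have ip: "i \<le> p" unfolding p_def by (rule cidx_props(4)[OF hk less.prems(3) r])
    have pk: "p < k" and pn: "p < n" using cidx_props(1,3)[OF hk] by (simp_all add: p_def)
    obtain f where f: "f \<in> Gs E n S p" "f (S ! p) = S ! k"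
      using cidx_props(2)[OF hk] restr_iff[OF pn] unfolding p_def by blast
    have fi: "f \<in> Gs E n S i" using Gs_mono[OF ip] f(1) by blast
    have "inv f \<circ> g \<in> Gs E n S i" by (rule Gs_comp[OF Gs_inv[OF fi] g(1)])
    moreover have "(inv f \<circ> g) (S ! i) = S ! p"
      using g(2) inv_f_eq[OF bij_is_inj[OF aut_bij[OF Gs_aut[OF fi]]] f(2)] by simp
    ultimately have "S ! p \<in> Orb E n S i" unfolding Orb_def by (metis image_eqI)
    then have "(i, p) \<in> RR" using less.IH[OF pk pn _ less.prems(3)] by blast
    moreover have "(p, k) \<in> cparent E n S" unfolding cparent_def p_def using hk by blast
    ultimately show ?thesis by (rule rtrancl_into_rtrancl)
  qed
qed

lemma Orb_eq:
  assumes i: "i < n"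
  shows "Orb E n S i = (\<lambda>k. S ! k) ` {k. k < n \<and> (i, k) \<in> RR}"
proof
  show "Orb E n S i \<subseteq> (\<lambda>k. S ! k) ` {k. k < n \<and> (i, k) \<in> RR}"
  proof
    fix v assume v: "v \<in> Orb E n S i"
    then obtain f where f: "f \<in> Gs E n S i" "v = f (S ! i)" unfolding Orb_def by blast
    have "v < n" using aut_lt[OF Gs_aut[OF f(1)] S_lt[OF i]] f(2) by simp
    then obtain k where k: "k < n" "S ! k = v" using S_surj by blast
    then have "(i, k) \<in> RR" using orb_fwd[OF k(1) _ i] v by simp
    then show "v \<in> (\<lambda>k. S ! k) ` {k. k < n \<and> (i, k) \<in> RR}" using k by blast
  qed
  show "(\<lambda>k. S ! k) ` {k. k < n \<and> (i, k) \<in> RR} \<subseteq> Orb E n S i"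
    using orb_back i by blast
qed

lemma Orb_card:
  assumes i: "i < n"
  shows "card (Orb E n S i) = card {k. k < n \<and> (i, k) \<in> RR}"
proof -
  have "inj_on (\<lambda>k. S ! k) {k. k < n \<and> (i, k) \<in> RR}"
    using inj_on_nth[OF S_dist, of "{k. k < n \<and> (i, k) \<in> RR}"] S_len by simp
  then show ?thesis unfolding Orb_eq[OF i] by (rule card_image)
qed


lemma Gs_finite: "finite (Gs E n S i)"
  by (rule finite_subset[OF _ aut_finite]) (auto simp: Gs_def)

lemma stab:
  assumes i: "i < n"
  shows "card (Gs E n S i) = card (Orb E n S i) * card (Gs E n S (Suc i))"
proof -
  let ?G = "Gs E n S i" and ?H = "Gs E n S (Suc i)" and ?O = "Orb E n S i"
  define F where "F v = {f \<in> ?G. f (S ! i) = v}" for v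
  have cover: "?G = (\<Union>v\<in>?O. F v)" unfolding F_def Orb_def by blast
  have finO: "finite ?O" unfolding Orb_def using Gs_finite by blast
  have "card ?G = (\<Sum>v\<in>?O. card (F v))"
    unfolding cover
    by (rule card_UN_disjoint[OF finO]) (auto simp: F_def intro: finite_subset[OF _ Gs_finite])
  also have "\<dots> = (\<Sum>v\<in>?O. card ?H)"
  proof (rule sum.cong[OF refl])
    fix v assume v: "v \<in> ?O"
    then obtain g where g: "g \<in> ?G" "g (S ! i) = v" unfolding Orb_def image_iff by metis
    have ga: "g \<in> aut E n" by (rule Gs_aut[OF g(1)])
    have bg: "bij g" by (rule aut_bij[OF ga])
    have ginj: "inj g" by (rule bij_is_inj[OF bg])
    have inj: "inj_on (\<lambda>h. g \<circ> h) ?H"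
    proof (rule inj_onI)
      fix h1 h2 assume eq: "g \<circ> h1 = g \<circ> h2"
      show "h1 = h2"
      proof
        fix x
        have "g (h1 x) = g (h2 x)" using eq by (metis comp_apply)
        then show "h1 x = h2 x" using ginj by (simp add: inj_eq)
      qed
    qed
    have img: "F v = (\<lambda>h. g \<circ> h) ` ?H"
    proof
      show "(\<lambda>h. g \<circ> h) ` ?H \<subseteq> F v"
      proof (rule image_subsetI)
        fix h assume h: "h \<in> ?H"
        have hG: "h \<in> ?G" using Gs_mono[of i "Suc i"] h by auto
        have "g \<circ> h \<in> ?G" by (rule Gs_comp[OF g(1) hG])
        moreover have "h (S ! i) = S ! i" by (rule Gs_fix[OF h]) simp
        ultimately show "g \<circ> h \<in> F v" unfolding F_def using g(2) by simp
      qed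
    next
      show "F v \<subseteq> (\<lambda>h. g \<circ> h) ` ?H"
      proof
        fix f assume f: "f \<in> F v"
        then have fG: "f \<in> ?G" and fv: "f (S ! i) = v" unfolding F_def by auto
        have "inv g \<circ> f \<in> ?H"
        proof (rule Gs_I)
          show "inv g \<circ> f \<in> aut E n" by (rule aut_comp[OF aut_inv[OF ga] Gs_aut[OF fG]])
          fix j assume j: "j < Suc i"
          show "(inv g \<circ> f) (S ! j) = S ! j"
          proof (cases "j < i")
            case True
            have "f (S ! j) = S ! j" by (rule Gs_fix[OF fG True])
            moreover have "inv g (S ! j) = S ! j"
              by (rule inv_f_eq[OF ginj Gs_fix[OF g(1) True]])
            ultimately show ?thesis by simp
          next
            case False
            then have "j = i" using j by simp
            moreover have "inv g v = S ! i" by (rule inv_f_eq[OF ginj g(2)])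
            ultimately show ?thesis using fv by simp
          qed
        qed
        moreover have "f = g \<circ> (inv g \<circ> f)"
          by (simp add: fun_eq_iff surj_f_inv_f[OF bij_is_surj[OF bg]])
        ultimately show "f \<in> (\<lambda>h. g \<circ> h) ` ?H" by (metis image_eqI)
      qed
    qed
    show "card (F v) = card ?H" unfolding img by (rule card_image[OF inj])
  qed
  also have "\<dots> = card ?O * card ?H" by simp
  finally show ?thesis .
qed

lemma G0: "Gs E n S 0 = aut E n"
  unfolding Gs_def by simp

lemma Gn: "Gs E n S n = {id}"
proof
  show "{id} \<subseteq> Gs E n S n" using Gs_id by simp
  show "Gs E n S n \<subseteq> {id}"
  proof
    fix f assume f: "f \<in> Gs E n S n"
    have "f = id"
    proof
      fix x show "f x = id x"
      proof (cases "x < n")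
        case True
        then obtain j where j: "j < n" "S ! j = x" using S_surj by blast
        then show ?thesis using Gs_fix[OF f j(1)] by simp
      next
        case False
        then show ?thesis using aut_out[OF Gs_aut[OF f]] by simp
      qed
    qed
    then show "f \<in> {id}" by simp
  qed
qed

lemma chain: "i \<le> n \<Longrightarrow> card (aut E n) = (\<Prod>j<i. card (Orb E n S j)) * card (Gs E n S i)"
proof (induction i)
  case 0 then show ?case by (simp add: G0)
next
  case (Suc i)
  then have "card (aut E n) = (\<Prod>j<i. card (Orb E n S j)) * card (Gs E n S i)" by simp
  also have "\<dots> = (\<Prod>j<i. card (Orb E n S j)) * (card (Orb E n S i) * card (Gs E n S (Suc i)))"
    using stab Suc.prems by simp
  finally show ?case by (simp add: mult_ac)
qed

lemma card_aut: "card (aut E n) = (\<Prod>j<n. card {k. k < n \<and> (j, k) \<in> RR})"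
  using chain[of n] by (simp add: Gn Orb_card)

end


lemma prod_if01:
  "finite A \<Longrightarrow> (\<Prod>i\<in>A. (if P i then 1 else (0::ennreal))) = (if \<forall>i\<in>A. P i then 1 else 0)"
  by (induction A rule: finite_induct) auto

theorem mainTheorem5:
  fixes E :: "nat \<Rightarrow> nat \<Rightarrow> bool" and n m :: nat and S :: "nat list"
  assumes "is_pattern E n" and "is_schedule E n S" and "m < n"
  defines "M \<equiv> PiM {..m} (\<lambda>_. uniform_measure lborel {0<..<(1::real)})"
  shows "measure M {x \<in> space M. \<forall>k\<le>m. has_c E n S k \<longrightarrow> x k < x (cidx E n S k)}
           = (\<Prod>i\<le>m. 1 / real (zcount E n S m i))
      \<and> (m = n - 1 \<longrightarrow>
           measure M {x \<in> space M. \<forall>k\<le>m. has_c E n S k \<longrightarrow> x k < x (cidx E n S k)}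
             = 1 / real (card (aut E n)))"
proof -
  note sch = assms(2)
  define hc where "hc = has_c E n S"
  define c where "c = cidx E n S"
  have hcl: "\<forall>k. hc k \<longrightarrow> c k < k" unfolding hc_def c_def by (rule hcl[OF sch])
  define Ev where "Ev = {x \<in> space M. \<forall>k\<le>m. hc k \<longrightarrow> x k < x (c k)}"
  have Mdef: "M = PiM {..<Suc m} (\<lambda>_. UU)" unfolding M_def lessThan_Suc_atMost ..
  have eqF: "indicator Ev x = FF hc c (\<lambda>_. 0) (Suc m) x" if x: "x \<in> space M" for x
  proof -
    have "FF hc c (\<lambda>_. 0) (Suc m) x = (\<Prod>i<Suc m. (if hc i \<longrightarrow> x i < x (c i) then 1 else (0::ennreal)))"
      unfolding FF_def by simp
    also have "\<dots> = (if \<forall>i\<in>{..<Suc m}. hc i \<longrightarrow> x i < x (c i) then 1 else 0)"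
      by (rule prod_if01) simp
    finally show ?thesis using x unfolding Ev_def by (auto simp: less_Suc_eq_le split: split_indicator)
  qed
  have measF: "FF hc c (\<lambda>_. 0) (Suc m) \<in> borel_measurable M"
    unfolding Mdef by (rule FF_meas[OF hcl])
  have "Ev = FF hc c (\<lambda>_. 0) (Suc m) -` {1} \<inter> space M"
  proof -
    have "x \<in> Ev \<longleftrightarrow> x \<in> space M \<and> FF hc c (\<lambda>_. 0) (Suc m) x = 1" for x
    proof (cases "x \<in> space M")
      case True
      then show ?thesis unfolding eqF[OF True, symmetric] by (simp add: indicator_def)
    next
      case False
      then show ?thesis unfolding Ev_def by simp
    qed
    then show ?thesis by blast
  qed
  then have EvM: "Ev \<in> sets M" using measurable_sets[OF measF, of "{1}"] by simp
  have "emeasure M Ev = (\<integral>\<^sup>+ x. indicator Ev x \<partial>M)"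
    by (rule nn_integral_indicator[symmetric, OF EvM])
  also have "\<dots> = (\<integral>\<^sup>+ x. FF hc c (\<lambda>_. 0) (Suc m) x \<partial>M)"
    by (rule nn_integral_cong) (simp add: eqF)
  also have "\<dots> = ennreal (\<Prod>i<Suc m. 1 / real (wt hc c (\<lambda>_. 0) (Suc m) i))"
    unfolding Mdef by (rule FF_int[OF hcl])
  finally have em: "emeasure M Ev = ennreal (\<Prod>i<Suc m. 1 / real (wt hc c (\<lambda>_. 0) (Suc m) i))" .
  have wtz: "wt hc c (\<lambda>_. 0) (Suc m) i = zcount E n S m i" for i
  proof -
    have "wt hc c (\<lambda>_. 0) (Suc m) i = card {j. j < Suc m \<and> (i, j) \<in> (Rel hc c)\<^sup>*}"
      unfolding wt_def by simp
    also have "{j. j < Suc m \<and> (i, j) \<in> (Rel hc c)\<^sup>*} = {j. j \<le> m \<and> (i, j) \<in> (cparent E n S)\<^sup>*}"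
      unfolding hc_def c_def cparent_Rel by (auto simp: less_Suc_eq_le)
    finally show ?thesis unfolding zcount_def .
  qed
  have meas: "measure M Ev = (\<Prod>i\<le>m. 1 / real (zcount E n S m i))"
    unfolding measure_def em wtz lessThan_Suc_atMost
    by (simp add: prod_nonneg)
  have part2: "(\<Prod>i\<le>m. 1 / real (zcount E n S m i)) = 1 / real (card (aut E n))" if mn: "m = n - 1"
  proof -
    have nS: "n = Suc m" using mn assms(3) by simp
    have z: "zcount E n S m i = card {k. k < n \<and> (i, k) \<in> (cparent E n S)\<^sup>*}" for i
      unfolding zcount_def nS by (simp add: less_Suc_eq_le)
    have "(\<Prod>i\<le>m. 1 / real (zcount E n S m i)) = (\<Prod>i<n. 1 / real (card {k. k < n \<and> (i, k) \<in> (cparent E n S)\<^sup>*}))"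
      unfolding z by (simp add: nS lessThan_Suc_atMost)
    also have "\<dots> = 1 / real (\<Prod>i<n. card {k. k < n \<and> (i, k) \<in> (cparent E n S)\<^sup>*})"
      by (simp add: prod_dividef)
    also have "\<dots> = 1 / real (card (aut E n))" by (simp add: card_aut[OF sch])
    finally show ?thesis .
  qed
  have meas': "measure M {x \<in> space M. \<forall>k\<le>m. has_c E n S k \<longrightarrow> x k < x (cidx E n S k)}
           = (\<Prod>i\<le>m. 1 / real (zcount E n S m i))"
    using meas unfolding Ev_def hc_def c_def .
  show ?thesis
  proof (intro conjI impI)
    show "measure M {x \<in> space M. \<forall>k\<le>m. has_c E n S k \<longrightarrow> x k < x (cidx E n S k)}
           = (\<Prod>i\<le>m. 1 / real (zcount E n S m i))" by (rule meas')
    assume "m = n - 1"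
    then show "measure M {x \<in> space M. \<forall>k\<le>m. has_c E n S k \<longrightarrow> x k < x (cidx E n S k)}
           = 1 / real (card (aut E n))" using meas' part2 by simp
  qed
qed

end
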